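(* Let $\mathcal A\subseteq E^\infty$, let $V\subseteq E$ be a block subspace, $\vec v$ a finite block sequence and $T$ a $(V,\vec v)$-rule, and suppose that for every block subspace $W\subseteq V$, player I has no strategy in $B^T_W(\vec v)$ to play in $\mathcal A$. (a) If $|\vec v|$ is odd, then there is a block subspace $X\subseteq V$ such that for every block subspace $Y\subseteq X$ there is $x\in Y$ with $\vec v\,\hat{}\,x\in T$ such that for every block subspace $W\subseteq X$, player I has no strategy in $B^T_W(\vec v\,\hat{}\,x)$ to play in $\mathcal A$. (b) If $|\vec v|$ is even, then there is a block subspace $X\subseteq V$ with $\vec v\,\hat{}\,x\in T$ for all non-zero $x\in X$, such that for every non-zero $x\in X$ and every block subspace $W\subseteq X$, player I has no strategy in $B^T_W(\vec v\,\hat{}\,x)$ to play in $\mathcal A$.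
   Context: Fix a countable field $\mathfrak F$ and let $E$ be the countable-dimensional $\mathfrak F$-vector space with basis $(e_n)$. For non-zero $x=\sum a_ne_n$, ${\rm supp}\,x=\{n:a_n\neq0\}$. A block sequence is a sequence of non-zero vectors with $\max{\rm supp}\,x_n<\min{\rm supp}\,x_{n+1}$. "Subspace" means an infinite-dimensional block subspace of $E$; vectors played are non-zero. For a subspace $X$, $X[k]=\{x\in X\setminus\{0\}:k<\min{\rm supp}\,x\}$. $E^\infty=E^{\mathbb N}$ with the product of discrete topologies; $E^{<\infty}$ is the set of finite block sequences; $\hat{}$ is concatenation; $T_{\vec x}=\{\vec y:\vec x\,\hat{}\,\vec y\in T\}$. Game $B_V(\vec v)$: if $|\vec v|$ is even: II plays a subspace $Z_0\subseteq V$; I plays non-zero $x_0\in Z_0$ and $n_0\in\mathbb N$; II plays non-zero $y_0\in V[n_0]$ and a subspace $Z_1\subseteq V$; I plays $x_1\in Z_1$, $n_1$; II plays $y_1\in V[n_1]$, $Z_2$; etc.; outcome $\vec v\,\hat{}\,(x_0,y_0,x_1,y_1,\dots)$. If $|\vec v|$ is odd: I plays $n_0$; II plays $y_0\in V[n_0]$ and $Z_0\subseteq V$; I plays $x_0\in Z_0$ and $n_1$; II plays $y_1\in V[n_1]$ and $Z_1$; etc.; outcome $\vec v\,\hat{}\,(y_0,x_0,y_1,x_1,\dots)$. A $(V,\vec v)$-rule is a set $T\subseteq E^{<\infty}$ with $\vec v\in T$ such that: (i) if $\vec y\in T$, $|\vec y|$ odd, then for every subspace $Z\subseteq V$ there is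 $z\in Z$ with $\vec y\,\hat{}\,z\in T$; (ii) if $\vec y\in T$, $|\vec y|$ even, then there is $n$ with $\vec y\,\hat{}\,z\in T$ for all $z\in V[n]$. The $T$-induced subgame $B^T_V(\vec v)$ is played as $B_V(\vec v)$ with the additional requirement that every position, i.e. the finite sequence of vectors played so far listed in the order they appear in the outcome, belongs to $T_{\vec v}$. A strategy to play in $\mathcal A$ is one all of whose outcomes lie in $\mathcal A$. *)

theory Defs
  imports Main "HOL-Library.Countable"
begin

text \<open>Vectors of E are finitely supported functions nat => F (coordinates w.r.t. the basis (e_n)).
  The countable field F is a type variable of class {field, countable}.\<close>

type_synonym 'f vec = "nat \<Rightarrow> 'f"

abbreviation zvec :: "('f::zero) vec" where "zvec \<equiv> (\<lambda>_. 0)"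

definition Evec :: "('f::field) vec set" where
  "Evec = {x. finite {n. x n \<noteq> 0}}"

definition supp :: "('f::field) vec \<Rightarrow> nat set" where
  "supp x = {n. x n \<noteq> 0}"

definition block_seq :: "(nat \<Rightarrow> ('f::field) vec) \<Rightarrow> bool" where
  "block_seq b \<longleftrightarrow> (\<forall>n. b n \<in> Evec \<and> b n \<noteq> zvec) \<and>
     (\<forall>n. Max (supp (b n)) < Min (supp (b (Suc n))))"

definition fin_block :: "('f::field) vec list \<Rightarrow> bool" where
  "fin_block xs \<longleftrightarrow> (\<forall>x\<in>set xs. x \<in> Evec \<and> x \<noteq> zvec) \<and>
     (\<forall>i. Suc i < length xs \<longrightarrow> Max (supp (xs ! i)) < Min (supp (xs ! Suc i)))"

definition lspan :: "(nat \<Rightarrow> ('f::field) vec) \<Rightarrow> 'f vec set" where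
  "lspan b = {x. \<exists>N c. x = (\<lambda>k. \<Sum>i<N. c i * b i k)}"

definition block_subspace :: "('f::field) vec set \<Rightarrow> bool" where
  "block_subspace X \<longleftrightarrow> (\<exists>b. block_seq b \<and> X = lspan b)"

definition tail :: "('f::field) vec set \<Rightarrow> nat \<Rightarrow> 'f vec set" where
  "tail X k = {x\<in>X. x \<noteq> zvec \<and> k < Min (supp x)}"

definition is_rule :: "('f::field) vec set \<Rightarrow> 'f vec list \<Rightarrow> 'f vec list set \<Rightarrow> bool" where
  "is_rule V v T \<longleftrightarrow> T \<subseteq> {xs. fin_block xs} \<and> v \<in> T \<and>
     (\<forall>y\<in>T. odd (length y) \<longrightarrow>
        (\<forall>Z. block_subspace Z \<and> Z \<subseteq> V \<longrightarrow> (\<exists>z\<in>Z. z \<noteq> zvec \<and> y @ [z] \<in> T))) \<and>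
     (\<forall>y\<in>T. even (length y) \<longrightarrow> (\<exists>n. \<forall>z\<in>tail V n. y @ [z] \<in> T))"

definition outcome :: "'a list \<Rightarrow> (nat \<Rightarrow> 'a) \<Rightarrow> (nat \<Rightarrow> 'a)" where
  "outcome u p = (\<lambda>i. if i < length u then u ! i else p (i - length u))"

text \<open>A strategy sigma for I maps the list of II's moves so far
  to I's next move (x, n).  II's k-th move is m k = (y_(k-1), Z_k) (the vector
  component of m 0 is ignored).  The vectors are played in the order x0, y0, x1, y1, ...\<close>
definition I_wins_even ::
  "'f vec list set \<Rightarrow> ('f::field) vec set \<Rightarrow> 'f vec list \<Rightarrow> (nat \<Rightarrow> 'f vec) set
   \<Rightarrow> (('f vec \<times> 'f vec set) list \<Rightarrow> 'f vec \<times> nat) \<Rightarrow> bool" where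
  "I_wins_even T W u A \<sigma> \<longleftrightarrow>
    (\<forall>m :: nat \<Rightarrow> 'f vec \<times> 'f vec set.
      let Im = (\<lambda>k. \<sigma> (map m [0..<Suc k]));
          x = (\<lambda>k. fst (Im k)); n = (\<lambda>k. snd (Im k));
          y = (\<lambda>k. fst (m (Suc k))); Z = (\<lambda>k. snd (m k));
          p = (\<lambda>i. if even i then x (i div 2) else y (i div 2));
          IIz = (\<lambda>k. block_subspace (Z k) \<and> Z k \<subseteq> W);
          Ix = (\<lambda>k. x k \<in> Z k \<and> x k \<noteq> zvec \<and> u @ map p [0..<2*k+1] \<in> T);
          IIy = (\<lambda>k. y k \<in> tail W (n k) \<and> u @ map p [0..<2*k+2] \<in> T)
      in (\<forall>k. (\<forall>j<k. IIz j \<and> Ix j \<and> IIy j) \<and> IIz k \<longrightarrow> Ix k) \<and>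
         ((\<forall>k. IIz k \<and> IIy k) \<longrightarrow> outcome u p \<in> A))"

text \<open>I's k-th move is sigma applied to II's first k moves,
  = (x_(k-1), n_k) (the vector component of I's 0-th move is ignored).  II's k-th move is
  m k = (y_k, Z_k).  The vectors are played in the order y0, x0, y1, x1, ...\<close>
definition I_wins_odd ::
  "'f vec list set \<Rightarrow> ('f::field) vec set \<Rightarrow> 'f vec list \<Rightarrow> (nat \<Rightarrow> 'f vec) set
   \<Rightarrow> (('f vec \<times> 'f vec set) list \<Rightarrow> 'f vec \<times> nat) \<Rightarrow> bool" where
  "I_wins_odd T W u A \<sigma> \<longleftrightarrow>
    (\<forall>m :: nat \<Rightarrow> 'f vec \<times> 'f vec set.
      let Im = (\<lambda>k. \<sigma> (map m [0..<k]));
          x = (\<lambda>k. fst (Im (Suc k))); n = (\<lambda>k. snd (Im k));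
          y = (\<lambda>k. fst (m k)); Z = (\<lambda>k. snd (m k));
          p = (\<lambda>i. if even i then y (i div 2) else x (i div 2));
          II = (\<lambda>k. y k \<in> tail W (n k) \<and> u @ map p [0..<2*k+1] \<in> T \<and>
                    block_subspace (Z k) \<and> Z k \<subseteq> W);
          Ix = (\<lambda>k. x k \<in> Z k \<and> x k \<noteq> zvec \<and> u @ map p [0..<2*k+2] \<in> T)
      in (\<forall>k. (\<forall>j<k. II j \<and> Ix j) \<and> II k \<longrightarrow> Ix k) \<and>
         ((\<forall>k. II k) \<longrightarrow> outcome u p \<in> A))"

definition I_has_strategy ::
  "'f vec list set \<Rightarrow> ('f::field) vec set \<Rightarrow> 'f vec list \<Rightarrow> (nat \<Rightarrow> 'f vec) set \<Rightarrow> bool" where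
  "I_has_strategy T W u A \<longleftrightarrow>
     (\<exists>\<sigma>. if even (length u) then I_wins_even T W u A \<sigma> else I_wins_odd T W u A \<sigma>)"

end

theory Submission
  imports Defs "HOL-Library.Countable_Set"
begin


definition lin_closed :: "('f::field) vec set \<Rightarrow> bool" where
  "lin_closed S \<longleftrightarrow> zvec \<in> S \<and> (\<forall>x\<in>S. \<forall>y\<in>S. (\<lambda>k. x k + y k) \<in> S) \<and> (\<forall>a. \<forall>x\<in>S. (\<lambda>k. a * x k) \<in> S)"

lemma sum_if_lt: "N1 \<le> (N::nat) \<Longrightarrow> (\<Sum>i<N. (if i < N1 then f i else 0)) = (\<Sum>i<N1. f i)"
proof (induction N)
  case 0 then show ?case by simp
next
  case (Suc N) then show ?case by (cases "N1 = Suc N") (auto simp: lessThan_Suc)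
qed

lemma lspan_lin_closed: "lin_closed (lspan b)"
  unfolding lin_closed_def
proof (intro conjI ballI allI)
  show "zvec \<in> lspan b" unfolding lspan_def by (rule CollectI, rule exI[of _ 0], auto)
next
  fix x y assume "x \<in> lspan b" "y \<in> lspan b"
  then obtain N1 c1 N2 c2 where x: "x = (\<lambda>k. \<Sum>i<N1. c1 i * b i k)" and y: "y = (\<lambda>k. \<Sum>i<N2. c2 i * b i k)"
    unfolding lspan_def by auto
  define N where "N = max N1 N2"
  define c where "c i = (if i < N1 then c1 i else 0) + (if i < N2 then c2 i else 0)" for i
  have "(\<lambda>k. x k + y k) = (\<lambda>k. \<Sum>i<N. c i * b i k)"
  proof
    fix k
    have "(\<Sum>i<N. c i * b i k) = (\<Sum>i<N. (if i < N1 then c1 i * b i k else 0)) + (\<Sum>i<N. (if i < N2 then c2 i * b i k else 0))"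
      unfolding sum.distrib[symmetric] by (intro sum.cong) (auto simp: c_def distrib_right)
    also have "\<dots> = x k + y k" unfolding x y N_def by (simp add: sum_if_lt)
    finally show "x k + y k = (\<Sum>i<N. c i * b i k)" by simp
  qed
  then show "(\<lambda>k. x k + y k) \<in> lspan b" unfolding lspan_def by blast
next
  fix a x assume "x \<in> lspan b"
  then obtain N c where x: "x = (\<lambda>k. \<Sum>i<N. c i * b i k)" unfolding lspan_def by auto
  have "(\<lambda>k. a * x k) = (\<lambda>k. \<Sum>i<N. (a * c i) * b i k)" unfolding x by (simp add: sum_distrib_left mult.assoc)
  then show "(\<lambda>k. a * x k) \<in> lspan b" unfolding lspan_def by (intro CollectI exI[of _ N] exI[of _ "\<lambda>i. a * c i"])
qed

lemma lin_closed_sum: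
  fixes M :: nat
  assumes "lin_closed S" "\<forall>i<M. y i \<in> S"
  shows "(\<lambda>k. \<Sum>i<M. c i * y i k) \<in> S"
  using assms(2)
proof (induction M)
  case 0 then show ?case using assms(1) unfolding lin_closed_def by simp
next
  case (Suc M)
  have a: "(\<lambda>k. \<Sum>i<M. c i * y i k) \<in> S" using Suc by simp
  have b: "(\<lambda>k. c M * y M k) \<in> S" using Suc.prems assms(1) unfolding lin_closed_def by simp
  have "\<forall>x\<in>S. \<forall>y\<in>S. (\<lambda>k. x k + y k) \<in> S" using assms(1) unfolding lin_closed_def by blast
  from bspec[OF bspec[OF this a] b]
  have "(\<lambda>k. (\<Sum>i<M. c i * y i k) + c M * y M k) \<in> S" by simp
  then show ?case by (simp add: lessThan_Suc add.commute)
qed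

lemma lspan_subset: "lin_closed S \<Longrightarrow> (\<And>i. y i \<in> S) \<Longrightarrow> lspan y \<subseteq> S"
  unfolding lspan_def using lin_closed_sum by blast

lemma lspan_basis: "b j \<in> lspan b"
proof -
  have "b j = (\<lambda>k. \<Sum>i<Suc j. (if i = j then 1 else 0) * b i k)"
    by (simp add: if_distrib cong: if_cong)
  then show ?thesis unfolding lspan_def by (intro CollectI exI)
qed

lemma block_lin_closed: "block_subspace X \<Longrightarrow> lin_closed X"
  unfolding block_subspace_def using lspan_lin_closed by blast

lemma Evec_lin_closed: "lin_closed Evec"
  unfolding lin_closed_def Evec_def
proof (intro conjI ballI allI; simp only: mem_Collect_eq)
  show "finite {n. (0::'a) \<noteq> 0}" by simp
next
  fix x y :: "'a vec" assume "finite {n. x n \<noteq> 0}" "finite {n. y n \<noteq> 0}"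
  then show "finite {n. x n + y n \<noteq> 0}" by (rule finite_subset[rotated, OF finite_UnI]) auto
next
  fix a and x :: "'a vec" assume "finite {n. x n \<noteq> 0}"
  then show "finite {n. a * x n \<noteq> 0}" 
    by (rule finite_subset[rotated]) auto
qed



lemma supp_fin: "x \<in> Evec \<Longrightarrow> finite (supp x)"
  unfolding Evec_def supp_def by simp

lemma supp_ne: "x \<noteq> zvec \<Longrightarrow> supp x \<noteq> {}"
  unfolding supp_def by auto

lemma Min_supp_in: "x \<in> Evec \<Longrightarrow> x \<noteq> zvec \<Longrightarrow> Min (supp x) \<in> supp x"
  using supp_fin supp_ne by (metis Min_in)

lemma Max_supp_in: "x \<in> Evec \<Longrightarrow> x \<noteq> zvec \<Longrightarrow> Max (supp x) \<in> supp x"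
  using supp_fin supp_ne by (metis Max_in)

lemma supp_bounds: "x \<in> Evec \<Longrightarrow> n \<in> supp x \<Longrightarrow> Min (supp x) \<le> n \<and> n \<le> Max (supp x)"
  using supp_fin[of x] by (simp add: Min_le Max_ge)

lemma in_supp: "n \<in> supp x \<longleftrightarrow> x n \<noteq> 0" unfolding supp_def by simp

lemma bs_nz: "block_seq b \<Longrightarrow> b i \<in> Evec \<and> b i \<noteq> zvec"
  unfolding block_seq_def by blast

lemma bs_minmax: "block_seq b \<Longrightarrow> Min (supp (b i)) \<le> Max (supp (b i))"
  using bs_nz[of b i] Min_supp_in supp_bounds by blast

lemma bs_lt: assumes "block_seq b" "i < j" shows "Max (supp (b i)) < Min (supp (b j))"
  using assms(2)
proof (induction j)
  case 0 then show ?case by simp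
next
  case (Suc j)
  have s: "Max (supp (b j)) < Min (supp (b (Suc j)))" using assms(1) unfolding block_seq_def by blast
  show ?case
  proof (cases "i = j")
    case True then show ?thesis using s by simp
  next
    case False then have "Max (supp (b i)) < Min (supp (b j))" using Suc by simp
    then show ?thesis using s bs_minmax[OF assms(1), of j] by simp
  qed
qed

lemma bs_disj: assumes "block_seq b" "i \<noteq> j" "b i n \<noteq> 0" shows "b j n = 0"
proof (rule ccontr)
  assume "b j n \<noteq> 0"
  then have "n \<in> supp (b j)" "n \<in> supp (b i)" using assms(3) by (auto simp: in_supp)
  then have "Min (supp (b j)) \<le> n \<and> n \<le> Max (supp (b j))" "Min (supp (b i)) \<le> n \<and> n \<le> Max (supp (b i))"
    using supp_bounds bs_nz[OF assms(1)] by blast+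
  moreover have "i < j \<or> j < i" using assms(2) by arith
  ultimately show False using bs_lt[OF assms(1), of i j] bs_lt[OF assms(1), of j i] by auto
qed

lemma bs_min: assumes "block_seq b" shows "i \<le> Min (supp (b i))"
proof (induction i)
  case 0 then show ?case by simp
next
  case (Suc i)
  then show ?case using bs_lt[OF assms, of i "Suc i"] bs_minmax[OF assms, of i] by simp
qed

lemma lspan_Evec: "block_seq b \<Longrightarrow> lspan b \<subseteq> Evec"
  using lspan_subset[OF Evec_lin_closed] bs_nz by blast

lemma block_Evec: "block_subspace X \<Longrightarrow> X \<subseteq> Evec"
  unfolding block_subspace_def using lspan_Evec by blast

lemma bs_shift: "block_seq b \<Longrightarrow> block_seq (\<lambda>i. b (i + K))"
  unfolding block_seq_def by simp

lemma lspan_supp: assumes "z \<in> lspan b" "z n \<noteq> 0" shows "\<exists>i. b i n \<noteq> 0"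
proof -
  obtain N c where z: "z = (\<lambda>k. \<Sum>i<N. c i * b i k)" using assms(1) unfolding lspan_def by auto
  show ?thesis
  proof (rule ccontr)
    assume "\<not> ?thesis" then have "z n = 0" unfolding z by simp
    then show False using assms(2) by simp
  qed
qed

lemma tail_sub:
  assumes "block_subspace Z"
  shows "\<exists>Z'. block_subspace Z' \<and> Z' \<subseteq> Z \<and> (\<forall>z\<in>Z'. z \<noteq> zvec \<longrightarrow> N < Min (supp z))"
proof -
  obtain b where b: "block_seq b" "Z = lspan b" using assms unfolding block_subspace_def by blast
  define b' where "b' = (\<lambda>i. b (i + Suc N))"
  have bs': "block_seq b'" unfolding b'_def using bs_shift[OF b(1)] .
  have sub: "lspan b' \<subseteq> Z" unfolding b'_def b(2) by (rule lspan_subset[OF lspan_lin_closed lspan_basis])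
  have "N < Min (supp z)" if zin: "z \<in> lspan b'" and znz: "z \<noteq> zvec" for z
  proof -
    have ev: "z \<in> Evec" using that lspan_Evec[OF bs'] by blast
    have m: "Min (supp z) \<in> supp z" using Min_supp_in[OF ev that(2)] .
    then have "z (Min (supp z)) \<noteq> 0" by (simp add: in_supp)
    then obtain i where "b' i (Min (supp z)) \<noteq> 0" using lspan_supp[OF zin] by blast
    then have "Min (supp (b' i)) \<le> Min (supp z)" using supp_bounds bs_nz[OF bs'] by (auto simp: in_supp)
    moreover have "i + Suc N \<le> Min (supp (b' i))" unfolding b'_def using bs_min[OF b(1)] by simp
    ultimately show ?thesis by simp
  qed
  then show ?thesis using bs' sub unfolding block_subspace_def by blast
qed

lemma exists_large:
  assumes "block_subspace X" shows "\<exists>x\<in>X. x \<noteq> zvec \<and> N < Min (supp x)"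
proof -
  obtain Z' where Z': "block_subspace Z'" "Z' \<subseteq> X" "\<forall>z\<in>Z'. z \<noteq> zvec \<longrightarrow> N < Min (supp z)"
    using tail_sub[OF assms] by blast
  obtain b where "block_seq b" "Z' = lspan b" using Z'(1) unfolding block_subspace_def by blast
  then have "b 0 \<in> Z'" "b 0 \<noteq> zvec" using lspan_basis bs_nz by blast+
  then show ?thesis using Z' by blast
qed



lemma sum_shift_zero:
  fixes f :: "nat \<Rightarrow> 'a::comm_monoid_add"
  assumes "\<forall>i. i \<le> K \<longrightarrow> i < M \<longrightarrow> f i = 0"
  shows "(\<Sum>i<M. f i) = (\<Sum>i<M - Suc K. f (i + Suc K))"
  using assms
proof (induction M)
  case 0 then show ?case by simp
next
  case (Suc M)
  show ?case
  proof (cases "M \<le> K")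
    case True then show ?thesis using Suc by simp
  next
    case False
    then have e: "Suc M - Suc K = Suc (M - Suc K)" by simp
    have "M - Suc K + Suc K = M" using False by simp
    then show ?thesis unfolding e using Suc by simp
  qed
qed

lemma lspan_tail:
  assumes bs: "block_seq x" and y: "y \<in> lspan x" "y \<noteq> zvec" "Max (supp (x K)) < Min (supp y)"
  shows "y \<in> lspan (\<lambda>i. x (i + Suc K))"
proof -
  obtain M c where yM: "y = (\<lambda>j. \<Sum>i<M. c i * x i j)" using y(1) unfolding lspan_def by auto
  have yev: "y \<in> Evec" using y(1) lspan_Evec[OF bs] by blast
  have cz: "c i = 0" if iK: "i \<le> K" and iM: "i < M" for i
  proof -
    define j0 where "j0 = Min (supp (x i))"
    have xi: "x i j0 \<noteq> 0" unfolding j0_def using Min_supp_in[of "x i"] bs_nz[OF bs, of i] by (simp add: in_supp)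
    have "j0 \<le> Max (supp (x i))" unfolding j0_def using bs_minmax[OF bs] .
    moreover have "Max (supp (x i)) \<le> Max (supp (x K))"
      using bs_lt[OF bs, of i K] bs_minmax[OF bs, of K] iK by (cases "i = K") auto
    ultimately have "j0 < Min (supp y)" using y(3) by simp
    then have "y j0 = 0" using supp_bounds[OF yev, of j0] by (auto simp: in_supp)
    moreover have "y j0 = (\<Sum>i'<M. (if i' = i then c i * x i j0 else 0))"
      unfolding yM using bs_disj[OF bs _ xi] by (intro sum.cong) auto
    moreover have "\<dots> = c i * x i j0" using iM by simp
    ultimately show ?thesis using xi by simp
  qed
  have "y = (\<lambda>j. \<Sum>i<M - Suc K. c (i + Suc K) * x (i + Suc K) j)"
  proof
    fix j
    have "y j = (\<Sum>i<M. c i * x i j)" unfolding yM ..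
    also have "\<dots> = (\<Sum>i<M - Suc K. c (i + Suc K) * x (i + Suc K) j)"
    proof (rule sum_shift_zero)
      show "\<forall>i. i \<le> K \<longrightarrow> i < M \<longrightarrow> c i * x i j = 0" using cz by simp
    qed
    finally show "y j = (\<Sum>i<M - Suc K. c (i + Suc K) * x (i + Suc K) j)" .
  qed
  then show ?thesis unfolding lspan_def by (intro CollectI exI[of _ "M - Suc K"] exI[of _ "\<lambda>i. c (i + Suc K)"])
qed

lemma fusion:
  fixes Xs :: "nat \<Rightarrow> ('f::field) vec set"
  assumes blk: "\<And>k. block_subspace (Xs k)" and dec: "\<And>k. Xs (Suc k) \<subseteq> Xs k"
  shows "\<exists>X. block_subspace X \<and> X \<subseteq> Xs 0 \<and> (\<forall>k. \<exists>N. \<forall>y\<in>X. y \<noteq> zvec \<and> N < Min (supp y) \<longrightarrow> y \<in> Xs k)"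
proof -
  define step where "step = (\<lambda>k (prev::'f vec). SOME x. x \<in> Xs k \<and> x \<noteq> zvec \<and> Max (supp prev) < Min (supp x))"
  have stepP: "step k prev \<in> Xs k \<and> step k prev \<noteq> zvec \<and> Max (supp prev) < Min (supp (step k prev))" for k prev
  proof -
    obtain x0 where "x0 \<in> Xs k \<and> x0 \<noteq> zvec \<and> Max (supp prev) < Min (supp x0)" using exists_large[OF blk, of k "Max (supp prev)"] by blast
    then show ?thesis unfolding step_def by (rule someI[where P="\<lambda>x. x \<in> Xs k \<and> x \<noteq> zvec \<and> Max (supp prev) < Min (supp x)"])
  qed
  define xf where "xf = rec_nat (step 0 (zvec :: 'f vec)) (\<lambda>k prev. step (Suc k) prev)"
  have xf0: "xf 0 = step 0 zvec" and xfS: "xf (Suc k) = step (Suc k) (xf k)" for k unfolding xf_def by simp_all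
  have xin: "xf k \<in> Xs k" for k
  proof (cases k)
    case 0 then show ?thesis using stepP[of 0 zvec] xf0 by simp
  next
    case (Suc k') then show ?thesis using stepP[of k "xf k'"] xfS[of k'] by simp
  qed
  have mono: "Xs j \<subseteq> Xs i" if "i \<le> j" for i j using lift_Suc_antimono_le[of Xs, OF dec that] .
  have bs: "block_seq xf" unfolding block_seq_def
  proof (intro conjI allI)
    fix n
    show "xf n \<in> Evec" using xin[of n] block_Evec[OF blk, of n] by blast
    show "xf n \<noteq> zvec"
    proof (cases n)
      case 0 then show ?thesis using stepP[of 0 zvec] xf0 by simp
    next
      case (Suc k') then show ?thesis using stepP[of n "xf k'"] xfS[of k'] by simp
    qed
    show "Max (supp (xf n)) < Min (supp (xf (Suc n)))" using stepP[of "Suc n" "xf n"] xfS[of n] by simp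
  qed
  have sub0: "lspan xf \<subseteq> Xs 0"
    by (rule lspan_subset[OF block_lin_closed[OF blk]]) (use xin mono[of 0] in blast)
  have "\<exists>N. \<forall>y\<in>lspan xf. y \<noteq> zvec \<and> N < Min (supp y) \<longrightarrow> y \<in> Xs k" for k
  proof (cases k)
    case 0 then show ?thesis using sub0 by blast
  next
    case (Suc K)
    have "lspan (\<lambda>i. xf (i + Suc K)) \<subseteq> Xs k"
      proof (rule lspan_subset[OF block_lin_closed[OF blk]])
      fix i show "xf (i + Suc K) \<in> Xs k" using xin[of "i + Suc K"] mono[of k "i + Suc K"] Suc by auto
    qed
    then show ?thesis using lspan_tail[OF bs, of _ K] by blast
  qed
  moreover have "block_subspace (lspan xf)" unfolding block_subspace_def using bs by blast
  ultimately show ?thesis using sub0 by blast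
qed



definition pp :: "(nat \<Rightarrow> 'a) \<Rightarrow> (nat \<Rightarrow> 'a) \<Rightarrow> nat \<Rightarrow> 'a" where
  "pp a b = (\<lambda>i. if even i then a (i div 2) else b (i div 2))"

definition IIzP :: "('f::field) vec set \<Rightarrow> (nat \<Rightarrow> 'f vec set) \<Rightarrow> nat \<Rightarrow> bool" where
  "IIzP W Z k \<longleftrightarrow> block_subspace (Z k) \<and> Z k \<subseteq> W"
definition IxE :: "('f::field) vec list set \<Rightarrow> 'f vec list \<Rightarrow> (nat \<Rightarrow> 'f vec) \<Rightarrow> (nat \<Rightarrow> 'f vec) \<Rightarrow> (nat \<Rightarrow> 'f vec set) \<Rightarrow> nat \<Rightarrow> bool" where
  "IxE T u x y Z k \<longleftrightarrow> x k \<in> Z k \<and> x k \<noteq> zvec \<and> u @ map (pp x y) [0..<2*k+1] \<in> T"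
definition IIyE :: "('f::field) vec list set \<Rightarrow> 'f vec set \<Rightarrow> 'f vec list \<Rightarrow> (nat \<Rightarrow> 'f vec) \<Rightarrow> (nat \<Rightarrow> nat) \<Rightarrow> (nat \<Rightarrow> 'f vec) \<Rightarrow> nat \<Rightarrow> bool" where
  "IIyE T W u x n y k \<longleftrightarrow> y k \<in> tail W (n k) \<and> u @ map (pp x y) [0..<2*k+2] \<in> T"
definition EV where
  "EV T W u A x n y Z \<longleftrightarrow>
    (\<forall>k. (\<forall>j<k. IIzP W Z j \<and> IxE T u x y Z j \<and> IIyE T W u x n y j) \<and> IIzP W Z k \<longrightarrow> IxE T u x y Z k) \<and>
    ((\<forall>k. IIzP W Z k \<and> IIyE T W u x n y k) \<longrightarrow> outcome u (pp x y) \<in> A)"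

definition IIO :: "('f::field) vec list set \<Rightarrow> 'f vec set \<Rightarrow> 'f vec list \<Rightarrow> (nat \<Rightarrow> 'f vec) \<Rightarrow> (nat \<Rightarrow> nat) \<Rightarrow> (nat \<Rightarrow> 'f vec) \<Rightarrow> (nat \<Rightarrow> 'f vec set) \<Rightarrow> nat \<Rightarrow> bool" where
  "IIO T W u x n y Z k \<longleftrightarrow> y k \<in> tail W (n k) \<and> u @ map (pp y x) [0..<2*k+1] \<in> T \<and> block_subspace (Z k) \<and> Z k \<subseteq> W"
definition IxO :: "('f::field) vec list set \<Rightarrow> 'f vec list \<Rightarrow> (nat \<Rightarrow> 'f vec) \<Rightarrow> (nat \<Rightarrow> 'f vec) \<Rightarrow> (nat \<Rightarrow> 'f vec set) \<Rightarrow> nat \<Rightarrow> bool" where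
  "IxO T u x y Z k \<longleftrightarrow> x k \<in> Z k \<and> x k \<noteq> zvec \<and> u @ map (pp y x) [0..<2*k+2] \<in> T"
definition OD where
  "OD T W u A x n y Z \<longleftrightarrow>
    (\<forall>k. (\<forall>j<k. IIO T W u x n y Z j \<and> IxO T u x y Z j) \<and> IIO T W u x n y Z k \<longrightarrow> IxO T u x y Z k) \<and>
    ((\<forall>k. IIO T W u x n y Z k) \<longrightarrow> outcome u (pp y x) \<in> A)"

lemma even_char: "I_wins_even T W u A \<sigma> \<longleftrightarrow> (\<forall>m. EV T W u A (\<lambda>k. fst (\<sigma> (map m [0..<Suc k]))) (\<lambda>k. snd (\<sigma> (map m [0..<Suc k]))) (\<lambda>k. fst (m (Suc k))) (\<lambda>k. snd (m k)))"
  unfolding I_wins_even_def EV_def IIzP_def IxE_def IIyE_def pp_def Let_def by simp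

lemma odd_char: "I_wins_odd T W u A \<sigma> \<longleftrightarrow> (\<forall>m. OD T W u A (\<lambda>k. fst (\<sigma> (map m [0..<Suc k]))) (\<lambda>k. snd (\<sigma> (map m [0..<k]))) (\<lambda>k. fst (m k)) (\<lambda>k. snd (m k)))"
  unfolding I_wins_odd_def OD_def IIO_def IxO_def pp_def Let_def by simp



lemma game_mono_even:
  fixes Pz Px Py Qz Qx Qy :: "nat \<Rightarrow> bool"
  assumes h1: "\<forall>k. (\<forall>j<k. Pz j \<and> Px j \<and> Py j) \<and> Pz k \<longrightarrow> Px k"
    and h2: "(\<forall>k. Pz k \<and> Py k) \<longrightarrow> R"
    and z: "\<And>k. Qz k \<Longrightarrow> Pz k" and y: "\<And>k. Qy k \<Longrightarrow> Py k"
    and x: "\<And>k. Qz k \<Longrightarrow> Px k \<Longrightarrow> Qx k" and r: "R \<Longrightarrow> R'"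
  shows "(\<forall>k. (\<forall>j<k. Qz j \<and> Qx j \<and> Qy j) \<and> Qz k \<longrightarrow> Qx k) \<and> ((\<forall>k. Qz k \<and> Qy k) \<longrightarrow> R')"
proof -
  have P: "(\<forall>j<k. Qz j \<and> Qy j) \<Longrightarrow> (\<forall>j<k. Pz j \<and> Px j \<and> Py j)" for k :: nat
  proof (induction k)
    case 0 then show ?case by simp
  next
    case (Suc k)
    then have a: "\<forall>j<k. Pz j \<and> Px j \<and> Py j" by simp
    have "Pz k" "Py k" using Suc.prems z y by auto
    then have "Px k" using h1 a by blast
    then show ?case using a \<open>Pz k\<close> \<open>Py k\<close> less_Suc_eq by auto
  qed
  show ?thesis
  proof (intro conjI allI impI)
    fix k assume a: "(\<forall>j<k. Qz j \<and> Qx j \<and> Qy j) \<and> Qz k"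
    then have "\<forall>j<k. Pz j \<and> Px j \<and> Py j" using P by blast
    then have "Px k" using h1 a z by blast
    then show "Qx k" using x a by blast
  next
    assume "\<forall>k. Qz k \<and> Qy k"
    then show R' using h2 z y r by blast
  qed
qed

lemma game_mono_odd:
  fixes Pz Px Qz Qx :: "nat \<Rightarrow> bool"
  assumes h1: "\<forall>k. (\<forall>j<k. Pz j \<and> Px j) \<and> Pz k \<longrightarrow> Px k"
    and h2: "(\<forall>k. Pz k) \<longrightarrow> R"
    and z: "\<And>k. Qz k \<Longrightarrow> Pz k"
    and x: "\<And>k. Qz k \<Longrightarrow> Px k \<Longrightarrow> Qx k" and r: "R \<Longrightarrow> R'"
  shows "(\<forall>k. (\<forall>j<k. Qz j \<and> Qx j) \<and> Qz k \<longrightarrow> Qx k) \<and> ((\<forall>k. Qz k) \<longrightarrow> R')"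
  using game_mono_even[of Pz Px "\<lambda>_. True" R Qz "\<lambda>_. True" Qx R'] assms by auto

lemma strat_transfer:
  fixes W W' :: "('f::field) vec set"
  assumes W: "block_subspace W" and alm: "\<forall>y\<in>W'. y \<noteq> zvec \<and> N < Min (supp y) \<longrightarrow> y \<in> W"
    and st: "I_has_strategy T W u A"
  shows "I_has_strategy T W' u A"
proof -
  obtain \<sigma> where \<sigma>: "if even (length u) then I_wins_even T W u A \<sigma> else I_wins_odd T W u A \<sigma>"
    using st unfolding I_has_strategy_def by blast
  define f where "f Z = (SOME Z''. block_subspace Z'' \<and> Z'' \<subseteq> Z \<and> (\<forall>z\<in>Z''. z \<noteq> zvec \<longrightarrow> N < Min (supp z)))" for Z :: "'f vec set"
  have fP: "block_subspace (f Z) \<and> f Z \<subseteq> Z \<and> (\<forall>z\<in>f Z. z \<noteq> zvec \<longrightarrow> N < Min (supp z))" if "block_subspace Z" for Z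
    unfolding f_def using tail_sub[OF that, of N] by (rule someI_ex)
  have fW: "f Z \<subseteq> W" if "block_subspace Z" "Z \<subseteq> W'" for Z
  proof
    fix z assume z: "z \<in> f Z"
    show "z \<in> W"
    proof (cases "z = zvec")
      case True then show ?thesis using block_lin_closed[OF W] unfolding lin_closed_def by simp
    next
      case False then show ?thesis using fP[OF that(1)] z that(2) alm by blast
    qed
  qed
  define g where "g q = (fst q, f (snd q))" for q :: "'f vec \<times> 'f vec set"
  define \<sigma>' where "\<sigma>' l = (fst (\<sigma> (map g l)), max (snd (\<sigma> (map g l))) N)" for l
  have tl: "y \<in> tail W' (max n N) \<Longrightarrow> y \<in> tail W n" for y n
    unfolding tail_def using alm by auto
  show ?thesis
  proof (cases "even (length u)")
    case True
    have "I_wins_even T W' u A \<sigma>'"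
      unfolding even_char
    proof
      fix m' :: "nat \<Rightarrow> 'f vec \<times> 'f vec set"
      define m where "m = g \<circ> m'"
      have mm: "map m [0..<k] = map g (map m' [0..<k])" for k unfolding m_def by simp
      have E: "EV T W u A (\<lambda>k. fst (\<sigma> (map m [0..<Suc k]))) (\<lambda>k. snd (\<sigma> (map m [0..<Suc k]))) (\<lambda>k. fst (m (Suc k))) (\<lambda>k. snd (m k))"
        using \<sigma> True unfolding even_char by simp
      show "EV T W' u A (\<lambda>k. fst (\<sigma>' (map m' [0..<Suc k]))) (\<lambda>k. snd (\<sigma>' (map m' [0..<Suc k]))) (\<lambda>k. fst (m' (Suc k))) (\<lambda>k. snd (m' k))"
        using E unfolding EV_def \<sigma>'_def mm[symmetric] m_def
        apply (simp only: comp_apply g_def fst_conv snd_conv)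
        apply (elim conjE, rule game_mono_even, assumption, assumption)
        subgoal for k unfolding IIzP_def using fP fW by blast
        subgoal for k unfolding IIyE_def using tl by blast
        subgoal for k unfolding IIzP_def IxE_def using fP by blast
        by assumption
    qed
    then show ?thesis unfolding I_has_strategy_def using True by auto
  next
    case False
    have "I_wins_odd T W' u A \<sigma>'"
      unfolding odd_char
    proof
      fix m' :: "nat \<Rightarrow> 'f vec \<times> 'f vec set"
      define m where "m = g \<circ> m'"
      have mm: "map m [0..<k] = map g (map m' [0..<k])" for k unfolding m_def by simp
      have E: "OD T W u A (\<lambda>k. fst (\<sigma> (map m [0..<Suc k]))) (\<lambda>k. snd (\<sigma> (map m [0..<k]))) (\<lambda>k. fst (m k)) (\<lambda>k. snd (m k))"
        using \<sigma> False unfolding odd_char by simp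
      show "OD T W' u A (\<lambda>k. fst (\<sigma>' (map m' [0..<Suc k]))) (\<lambda>k. snd (\<sigma>' (map m' [0..<k]))) (\<lambda>k. fst (m' k)) (\<lambda>k. snd (m' k))"
        using E unfolding OD_def \<sigma>'_def mm[symmetric] m_def
        apply (simp only: comp_apply g_def fst_conv snd_conv)
        apply (elim conjE, rule game_mono_odd, assumption, assumption)
        subgoal for k unfolding IIO_def using fP fW tl by blast
        subgoal for k unfolding IIO_def IxO_def using fP by blast
        by assumption
    qed
    then show ?thesis unfolding I_has_strategy_def using False by auto
  qed
qed



lemma pp_Suc: "pp y x (Suc i) = pp x (\<lambda>k. y (Suc k)) i"
  unfolding pp_def by auto

lemma map_pp_shift: "map (pp y x) [0..<Suc j] = y 0 # map (pp x (\<lambda>k. y (Suc k))) [0..<j]"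
proof -
  have "[0..<Suc j] = 0 # map Suc [0..<j]" by (simp add: map_Suc_upt upt_conv_Cons)
  then show ?thesis by (simp add: pp_Suc) (simp add: pp_def)
qed

lemma app_pp_shift: "u @ map (pp y x) [0..<Suc j] = (u @ [y 0]) @ map (pp x (\<lambda>k. y (Suc k))) [0..<j]"
  using map_pp_shift by simp

lemma outcome_shift: "outcome u (pp y x) = outcome (u @ [y 0]) (pp x (\<lambda>k. y (Suc k)))"
proof
  fix i
  consider "i < length u" | "i = length u" | "length u < i" by arith
  then show "outcome u (pp y x) i = outcome (u @ [y 0]) (pp x (\<lambda>k. y (Suc k))) i"
  proof cases
    case 1 then show ?thesis unfolding outcome_def by (simp add: nth_append)
  next
    case 2 then show ?thesis unfolding outcome_def by (simp add: nth_append pp_def)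
  next
    case 3
    then have "i - length u = Suc (i - Suc (length u))" by arith
    then show ?thesis using 3 unfolding outcome_def by (simp add: pp_Suc)
  qed
qed

lemma logic_odd:
  fixes Pz Px Py Qz Qx :: "nat \<Rightarrow> bool"
  assumes h1: "\<forall>k. (\<forall>j<k. Pz j \<and> Px j \<and> Py j) \<and> Pz k \<longrightarrow> Px k"
    and h2: "(\<forall>k. Pz k \<and> Py k) \<longrightarrow> R"
    and q0: "Qz 0 \<Longrightarrow> Pz 0" and qS: "\<And>k. Qz (Suc k) \<longleftrightarrow> Py k \<and> Pz (Suc k)"
    and qx: "\<And>k. Qx k \<longleftrightarrow> Px k"
  shows "(\<forall>k. (\<forall>j<k. Qz j \<and> Qx j) \<and> Qz k \<longrightarrow> Qx k) \<and> ((\<forall>k. Qz k) \<longrightarrow> R)"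
proof -
  have qz: "Qz k \<Longrightarrow> Pz k" for k using q0 qS by (cases k) auto
  show ?thesis
  proof (intro conjI allI impI)
    fix k assume a: "(\<forall>j<k. Qz j \<and> Qx j) \<and> Qz k"
    have "\<forall>j<k. Pz j \<and> Px j \<and> Py j"
    proof (intro allI impI)
      fix j assume "j < k"
      then have "Qz j" "Qx j" using a by auto
      have "Qz (Suc j)"
      proof (cases "Suc j = k")
        case True then show ?thesis using a by simp
      next
        case False then show ?thesis using a \<open>j < k\<close> by auto
      qed
      then show "Pz j \<and> Px j \<and> Py j" using qz qx qS \<open>Qz j\<close> \<open>Qx j\<close> by blast
    qed
    then have "Px k" using h1 a qz by blast
    then show "Qx k" using qx by blast
  next
    assume a: "\<forall>k. Qz k"
    have "\<forall>k. Pz k \<and> Py k" using a qz qS by blast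
    then show R using h2 by blast
  qed
qed

lemma logic_odd_vac:
  fixes Qz Qx :: "nat \<Rightarrow> bool"
  assumes "\<not> Qz 0"
  shows "(\<forall>k. (\<forall>j<k. Qz j \<and> Qx j) \<and> Qz k \<longrightarrow> Qx k) \<and> ((\<forall>k. Qz k) \<longrightarrow> R)"
  using assms by (metis gr0I)

lemma logic_even:
  fixes Pz Px Py Qz Qx :: "nat \<Rightarrow> bool"
  assumes h1: "\<forall>k. (\<forall>j<k. Qz j \<and> Qx j) \<and> Qz k \<longrightarrow> Qx k"
    and h2: "(\<forall>k. Qz k) \<longrightarrow> R"
    and p0: "Px 0"
    and qz: "\<And>k. Qz k \<longleftrightarrow> Py k \<and> Pz (Suc k)"
    and qx: "\<And>k. Px (Suc k) \<longleftrightarrow> Qx k"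
  shows "(\<forall>k. (\<forall>j<k. Pz j \<and> Px j \<and> Py j) \<and> Pz k \<longrightarrow> Px k) \<and> ((\<forall>k. Pz k \<and> Py k) \<longrightarrow> R)"
proof (intro conjI allI impI)
  fix k assume a: "(\<forall>j<k. Pz j \<and> Px j \<and> Py j) \<and> Pz k"
  show "Px k"
  proof (cases k)
    case 0 then show ?thesis using p0 by simp
  next
    case (Suc k')
    have "\<forall>j<k'. Qz j \<and> Qx j"
    proof (intro allI impI)
      fix j assume "j < k'"
      then have "Py j" "Pz (Suc j)" "Px (Suc j)" using a Suc by auto
      then show "Qz j \<and> Qx j" using qz qx by blast
    qed
    moreover have "Qz k'" using a Suc qz by auto
    ultimately have "Qx k'" using h1 by blast
    then show ?thesis using Suc qx by simp
  qed
next
  assume "\<forall>k. Pz k \<and> Py k"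
  then have "\<forall>k. Qz k" using qz by blast
  then show R using h2 by blast
qed

lemma logic_even_vac:
  fixes Pz Px Py :: "nat \<Rightarrow> bool"
  assumes "\<not> Pz 0"
  shows "(\<forall>k. (\<forall>j<k. Pz j \<and> Px j \<and> Py j) \<and> Pz k \<longrightarrow> Px k) \<and> ((\<forall>k. Pz k \<and> Py k) \<longrightarrow> R)"
  using assms by (metis gr0I)



lemma comb_odd:
  fixes W :: "('f::field) vec set"
  assumes odd: "odd (length u)" and H: "\<forall>y\<in>tail W 0. u @ [y] \<in> T \<longrightarrow> I_has_strategy T W (u @ [y]) A"
  shows "I_has_strategy T W u A"
proof -
  define S where "S y = (SOME \<sigma>. I_wins_even T W (u @ [y]) A \<sigma>)" for y
  have SP: "I_wins_even T W (u @ [y]) A (S y)" if "y \<in> tail W 0" "u @ [y] \<in> T" for y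
  proof -
    have "\<exists>\<sigma>. I_wins_even T W (u @ [y]) A \<sigma>" using H that odd unfolding I_has_strategy_def by simp
    then show ?thesis unfolding S_def by (rule someI_ex)
  qed
  define \<sigma> where "\<sigma> l = (case l of [] \<Rightarrow> (zvec, 0) | a # _ \<Rightarrow> S (fst a) l)" for l
  have "I_wins_odd T W u A \<sigma>" unfolding odd_char
  proof
    fix m :: "nat \<Rightarrow> 'f vec \<times> 'f vec set"
    define y0 where "y0 = fst (m 0)"
    have s1: "\<sigma> (map m [0..<Suc k]) = S y0 (map m [0..<Suc k])" for k
      by (simp add: \<sigma>_def y0_def upt_conv_Cons del: upt_Suc)
    define x where "x k = fst (S y0 (map m [0..<Suc k]))" for k
    define ne where "ne k = snd (S y0 (map m [0..<Suc k]))" for k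
    define n where "n k = (case k of 0 \<Rightarrow> 0 | Suc k' \<Rightarrow> ne k')" for k
    define y where "y k = fst (m k)" for k
    define ye where "ye k = y (Suc k)" for k
    define Z where "Z k = snd (m k)" for k
    have s2: "snd (\<sigma> (map m [0..<k])) = n k" for k
      by (cases k) (simp_all only: s1 n_def ne_def, simp_all add: \<sigma>_def)
    have ap: "u @ map (pp y x) [0..<Suc j] = (u @ [y0]) @ map (pp x ye) [0..<j]" for j
      using app_pp_shift[of u y x j] unfolding ye_def y_def y0_def by simp
    have oc: "outcome u (pp y x) = outcome (u @ [y0]) (pp x ye)"
      using outcome_shift[of u y x] unfolding ye_def y_def y0_def by simp
    have goal: "OD T W u A x n y Z"
    proof (cases "y0 \<in> tail W 0 \<and> u @ [y0] \<in> T")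
      case True
      have E: "EV T W (u @ [y0]) A x ne ye Z"
        using SP[of y0] True unfolding even_char x_def ne_def ye_def y_def Z_def by blast
      show ?thesis unfolding OD_def
      proof (rule logic_odd[where Pz = "IIzP W Z" and Px = "IxE T (u @ [y0]) x ye Z" and Py = "IIyE T W (u @ [y0]) x ne ye"])
        show "\<forall>k. (\<forall>j<k. IIzP W Z j \<and> IxE T (u @ [y0]) x ye Z j \<and> IIyE T W (u @ [y0]) x ne ye j) \<and> IIzP W Z k \<longrightarrow> IxE T (u @ [y0]) x ye Z k"
          using E unfolding EV_def by blast
        show "(\<forall>k. IIzP W Z k \<and> IIyE T W (u @ [y0]) x ne ye k) \<longrightarrow> outcome u (pp y x) \<in> A"
          using E unfolding EV_def oc by blast
        show "IIO T W u x n y Z 0 \<Longrightarrow> IIzP W Z 0" unfolding IIO_def IIzP_def by blast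
      next
        fix k
        have e: "2 * Suc k + 1 = Suc (2 * k + 2)" by simp
        show "IIO T W u x n y Z (Suc k) \<longleftrightarrow> IIyE T W (u @ [y0]) x ne ye k \<and> IIzP W Z (Suc k)"
          unfolding IIO_def IIyE_def IIzP_def e ap unfolding ye_def n_def by simp
      next
        fix k
        have e: "2 * k + 2 = Suc (2 * k + 1)" by simp
        show "IxO T u x y Z k \<longleftrightarrow> IxE T (u @ [y0]) x ye Z k"
          unfolding IxO_def IxE_def e ap ..
      qed
    next
      case False
      have "\<not> IIO T W u x n y Z 0"
        using False unfolding IIO_def n_def y_def y0_def by (auto simp: pp_def)
      then show ?thesis unfolding OD_def by (rule logic_odd_vac)
    qed
    show "OD T W u A (\<lambda>k. fst (\<sigma> (map m [0..<Suc k]))) (\<lambda>k. snd (\<sigma> (map m [0..<k]))) (\<lambda>k. fst (m k)) (\<lambda>k. snd (m k))"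
      using goal unfolding s1 s2 x_def[symmetric] y_def[symmetric] Z_def[symmetric]
      by (simp add: x_def[symmetric] y_def[symmetric] Z_def[symmetric] n_def[symmetric] cong del: if_cong)
  qed
  then show ?thesis unfolding I_has_strategy_def using odd by auto
qed

lemma comb_even:
  fixes W :: "('f::field) vec set"
  assumes ev: "even (length u)"
    and H: "\<forall>Z. block_subspace Z \<and> Z \<subseteq> W \<longrightarrow> (\<exists>x\<in>Z. x \<noteq> zvec \<and> u @ [x] \<in> T \<and> I_has_strategy T W (u @ [x]) A)"
  shows "I_has_strategy T W u A"
proof -
  define ch where "ch Z = (SOME x. x \<in> Z \<and> x \<noteq> zvec \<and> u @ [x] \<in> T \<and> I_has_strategy T W (u @ [x]) A)" for Z
  have chP: "ch Z \<in> Z \<and> ch Z \<noteq> zvec \<and> u @ [ch Z] \<in> T \<and> I_has_strategy T W (u @ [ch Z]) A"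
    if "block_subspace Z" "Z \<subseteq> W" for Z
  proof -
    have "\<exists>x. x \<in> Z \<and> x \<noteq> zvec \<and> u @ [x] \<in> T \<and> I_has_strategy T W (u @ [x]) A" using H that by blast
    then show ?thesis unfolding ch_def by (rule someI_ex)
  qed
  define S where "S c = (SOME \<sigma>. I_wins_odd T W (u @ [c]) A \<sigma>)" for c
  have SP: "I_wins_odd T W (u @ [c]) A (S c)" if "I_has_strategy T W (u @ [c]) A" for c
  proof -
    have "\<exists>\<sigma>. I_wins_odd T W (u @ [c]) A \<sigma>" using that ev unfolding I_has_strategy_def by simp
    then show ?thesis unfolding S_def by (rule someI_ex)
  qed
  define \<sigma> where "\<sigma> l = (case l of [] \<Rightarrow> (zvec, 0) | a # l' \<Rightarrow> (if l' = [] then ch (snd a) else fst (S (ch (snd a)) l'), snd (S (ch (snd a)) l')))" for l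
  have "I_wins_even T W u A \<sigma>" unfolding even_char
  proof
    fix m :: "nat \<Rightarrow> 'f vec \<times> 'f vec set"
    define c where "c = ch (snd (m 0))"
    define m' where "m' k = m (Suc k)" for k
    have mm: "map m [0..<Suc k] = m 0 # map m' [0..<k]" for k
      unfolding m'_def by (simp add: upt_conv_Cons map_Suc_upt[symmetric] del: upt_Suc)
    define xo where "xo k = fst (S c (map m' [0..<Suc k]))" for k
    define x where "x k = (case k of 0 \<Rightarrow> c | Suc k' \<Rightarrow> xo k')" for k
    define n where "n k = snd (S c (map m' [0..<k]))" for k
    define y where "y k = fst (m' k)" for k
    define Z where "Z k = snd (m k)" for k
    define Zo where "Zo k = Z (Suc k)" for k
    have s1: "fst (\<sigma> (map m [0..<Suc k])) = x k" for k
      unfolding mm by (cases k) (simp_all add: \<sigma>_def x_def xo_def c_def)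
    have s2: "snd (\<sigma> (map m [0..<Suc k])) = n k" for k
      unfolding mm by (simp add: \<sigma>_def n_def c_def)
    have s3: "(\<lambda>k. fst (m (Suc k))) = y" unfolding y_def m'_def ..
    have x0: "x 0 = c" and xS: "(\<lambda>k. x (Suc k)) = xo" unfolding x_def by simp_all
    have ap: "u @ map (pp x y) [0..<Suc j] = (u @ [c]) @ map (pp y xo) [0..<j]" for j
      using app_pp_shift[of u x y j] unfolding x0 xS by simp
    have oc: "outcome u (pp x y) = outcome (u @ [c]) (pp y xo)"
      using outcome_shift[of u x y] unfolding x0 xS by simp
    have goal: "EV T W u A x n y Z"
    proof (cases "IIzP W Z 0")
      case True
      then have cP: "c \<in> Z 0 \<and> c \<noteq> zvec \<and> u @ [c] \<in> T \<and> I_has_strategy T W (u @ [c]) A"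
        using chP unfolding IIzP_def c_def Z_def by blast
      have O: "OD T W (u @ [c]) A xo n y Zo"
        using SP[of c] cP unfolding odd_char xo_def n_def y_def Zo_def Z_def m'_def by blast
      show ?thesis unfolding EV_def
      proof (rule logic_even[where Qz = "IIO T W (u @ [c]) xo n y Zo" and Qx = "IxO T (u @ [c]) xo y Zo"])
        show "\<forall>k. (\<forall>j<k. IIO T W (u @ [c]) xo n y Zo j \<and> IxO T (u @ [c]) xo y Zo j) \<and> IIO T W (u @ [c]) xo n y Zo k \<longrightarrow> IxO T (u @ [c]) xo y Zo k"
          using O unfolding OD_def by blast
        show "(\<forall>k. IIO T W (u @ [c]) xo n y Zo k) \<longrightarrow> outcome u (pp x y) \<in> A"
          using O unfolding OD_def oc by blast
        show "IxE T u x y Z 0" unfolding IxE_def using cP x0 by (simp add: pp_def)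
      next
        fix k
        have e: "2 * k + 2 = Suc (2 * k + 1)" by simp
        show "IIO T W (u @ [c]) xo n y Zo k \<longleftrightarrow> IIyE T W u x n y k \<and> IIzP W Z (Suc k)"
          unfolding IIO_def IIyE_def IIzP_def e ap Zo_def by blast
      next
        fix k
        have e: "2 * Suc k + 1 = Suc (2 * k + 2)" by simp
        show "IxE T u x y Z (Suc k) \<longleftrightarrow> IxO T (u @ [c]) xo y Zo k"
          unfolding IxO_def IxE_def e ap Zo_def using xS by (metis)
      qed
    next
      case False
      then show ?thesis unfolding EV_def by (rule logic_even_vac)
    qed
    show "EV T W u A (\<lambda>k. fst (\<sigma> (map m [0..<Suc k]))) (\<lambda>k. snd (\<sigma> (map m [0..<Suc k]))) (\<lambda>k. fst (m (Suc k))) (\<lambda>k. snd (m k))"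
      unfolding s1 s2 s3 using goal unfolding Z_def by simp
  qed
  then show ?thesis unfolding I_has_strategy_def using ev by auto
qed



lemma Evec_zero_beyond: "x \<in> Evec \<Longrightarrow> Max (supp x) < i \<Longrightarrow> x i = 0"
proof (rule ccontr)
  assume a: "x \<in> Evec" "Max (supp x) < i" "x i \<noteq> 0"
  then have "i \<in> supp x" by (simp add: in_supp)
  then have "i \<le> Max (supp x)" using supp_bounds[OF a(1)] by blast
  then show False using a(2) by simp
qed

lemma countable_Evec: "countable (Evec :: ('f::{field,countable}) vec set)"
proof (rule countable_image_inj_on)
  define f :: "'f vec \<Rightarrow> 'f list" where "f x = map x [0..<Suc (Max (supp x))]" for x
  show "countable (f ` Evec)" by simp
  show "inj_on f Evec"
  proof
    fix x y assume xy: "x \<in> Evec" "y \<in> Evec" "f x = f y"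
    then have l: "Max (supp x) = Max (supp y)" unfolding f_def using length_map by (metis Suc_inject length_upt minus_nat.diff_0)
    show "x = y"
    proof
      fix i
      show "x i = y i"
      proof (cases "i \<le> Max (supp x)")
        case True
        have "f x ! i = x i" "f y ! i = y i" unfolding f_def using True l by (simp_all add: nth_map_upt less_Suc_eq_le del: upt_Suc)
        then show ?thesis using xy(3) by simp
      next
        case False
        then show ?thesis using Evec_zero_beyond[OF xy(1)] Evec_zero_beyond[OF xy(2)] l by simp
      qed
    qed
  qed
qed

lemma decide:
  fixes S :: "('f::{field,countable}) vec set \<Rightarrow> 'f vec \<Rightarrow> bool" and V :: "'f vec set"
  assumes mono: "\<And>W W' x N. block_subspace W \<Longrightarrow> block_subspace W' \<Longrightarrow> (\<forall>y\<in>W'. y \<noteq> zvec \<and> N < Min (supp y) \<longrightarrow> y \<in> W) \<Longrightarrow> S W x \<Longrightarrow> S W' x"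
    and V: "block_subspace V"
  shows "\<exists>X. block_subspace X \<and> X \<subseteq> V \<and> (\<forall>x\<in>Evec. (\<forall>W. block_subspace W \<and> W \<subseteq> X \<longrightarrow> \<not> S W x) \<or> (\<forall>W. block_subspace W \<and> W \<subseteq> X \<longrightarrow> S W x))"
proof -
  define e where "e = from_nat_into (Evec :: 'f vec set)"
  have esurj: "\<exists>k. e k = x" if "x \<in> Evec" for x unfolding e_def using from_nat_into_surj[OF countable_Evec that] .
  define acc where "acc X x \<longleftrightarrow> (\<forall>W. block_subspace W \<and> W \<subseteq> X \<longrightarrow> \<not> S W x)" for X x
  define nxt where "nxt k X = (if acc X (e k) then X else SOME W. block_subspace W \<and> W \<subseteq> X \<and> S W (e k))" for k X
  have nxtP: "block_subspace (nxt k X) \<and> nxt k X \<subseteq> X \<and> ((acc X (e k) \<and> nxt k X = X) \<or> S (nxt k X) (e k))"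
    if "block_subspace X" for k X
  proof (cases "acc X (e k)")
    case True then show ?thesis using that unfolding nxt_def by simp
  next
    case False
    then have "\<exists>W. block_subspace W \<and> W \<subseteq> X \<and> S W (e k)" unfolding acc_def by blast
    then have "block_subspace (nxt k X) \<and> nxt k X \<subseteq> X \<and> S (nxt k X) (e k)"
      unfolding nxt_def using False by simp (rule someI_ex)
    then show ?thesis by blast
  qed
  define Xs where "Xs = rec_nat V nxt"
  have Xs0: "Xs 0 = V" and XsS: "Xs (Suc k) = nxt k (Xs k)" for k unfolding Xs_def by simp_all
  have blk: "block_subspace (Xs k)" for k by (induction k) (simp_all add: Xs0 V XsS nxtP)
  have dec: "Xs (Suc k) \<subseteq> Xs k" for k using nxtP[OF blk] XsS by simp
  obtain X where X: "block_subspace X" "X \<subseteq> Xs 0" "\<forall>k. \<exists>N. \<forall>y\<in>X. y \<noteq> zvec \<and> N < Min (supp y) \<longrightarrow> y \<in> Xs k"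
    using fusion[of Xs, OF blk dec] by blast
  have "(\<forall>W. block_subspace W \<and> W \<subseteq> X \<longrightarrow> \<not> S W x) \<or> (\<forall>W. block_subspace W \<and> W \<subseteq> X \<longrightarrow> S W x)" if xE: "x \<in> Evec" for x
  proof -
    obtain k where k: "e k = x" using esurj[OF xE] by blast
    show ?thesis
    proof (cases "acc (Xs k) (e k)")
      case True
      have "\<not> S W x" if W: "block_subspace W" "W \<subseteq> X" for W
      proof
        assume SW: "S W x"
        obtain N where N: "\<forall>y\<in>X. y \<noteq> zvec \<and> N < Min (supp y) \<longrightarrow> y \<in> Xs k" using X(3) by blast
        obtain W'' where W'': "block_subspace W''" "W'' \<subseteq> W" "\<forall>z\<in>W''. z \<noteq> zvec \<longrightarrow> N < Min (supp z)"
          using tail_sub[OF W(1), of N] by blast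
        have "W'' \<subseteq> Xs k"
        proof
          fix z assume z: "z \<in> W''"
          show "z \<in> Xs k"
          proof (cases "z = zvec")
            case True then show ?thesis using block_lin_closed[OF blk[of k]] unfolding lin_closed_def by simp
          next
            case False then show ?thesis using W''(2,3) z W(2) N by blast
          qed
        qed
        moreover have "S W'' x" using mono[OF W(1) W''(1), of 0] W''(2) SW by blast
        ultimately show False using True W''(1) k unfolding acc_def by blast
      qed
      then show ?thesis by blast
    next
      case False
      then have S1: "S (Xs (Suc k)) x" using nxtP[OF blk[of k], of k] XsS k by auto
      have "S W x" if W: "block_subspace W" "W \<subseteq> X" for W
      proof -
        obtain N where N: "\<forall>y\<in>X. y \<noteq> zvec \<and> N < Min (supp y) \<longrightarrow> y \<in> Xs (Suc k)" using X(3) by blast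
        then have "\<forall>y\<in>W. y \<noteq> zvec \<and> N < Min (supp y) \<longrightarrow> y \<in> Xs (Suc k)" using W(2) by blast
        then show ?thesis using mono[OF blk W(1)] S1 by blast
      qed
      then show ?thesis by blast
    qed
  qed
  then show ?thesis using X(1,2) Xs0 by blast
qed



theorem mainTheorem6:
  fixes A :: "(nat \<Rightarrow> ('f::{field,countable}) vec) set"
    and V :: "'f vec set" and v :: "'f vec list" and T :: "'f vec list set"
  assumes "A \<subseteq> {s. \<forall>i. s i \<in> Evec}"
    and "block_subspace V"
    and "fin_block v"
    and "is_rule V v T"
    and "\<forall>W. block_subspace W \<and> W \<subseteq> V \<longrightarrow> \<not> I_has_strategy T W v A"
  shows "(odd (length v) \<longrightarrow>
            (\<exists>X. block_subspace X \<and> X \<subseteq> V \<and>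
               (\<forall>Y. block_subspace Y \<and> Y \<subseteq> X \<longrightarrow>
                  (\<exists>x\<in>Y. x \<noteq> zvec \<and> v @ [x] \<in> T \<and>
                     (\<forall>W. block_subspace W \<and> W \<subseteq> X \<longrightarrow> \<not> I_has_strategy T W (v @ [x]) A)))))
       \<and> (even (length v) \<longrightarrow>
            (\<exists>X. block_subspace X \<and> X \<subseteq> V \<and>
               (\<forall>x\<in>X. x \<noteq> zvec \<longrightarrow> v @ [x] \<in> T) \<and>
               (\<forall>x\<in>X. x \<noteq> zvec \<longrightarrow>
                  (\<forall>W. block_subspace W \<and> W \<subseteq> X \<longrightarrow> \<not> I_has_strategy T W (v @ [x]) A))))"
proof -
  note V = assms(2) and rule = assms(4) and hyp = assms(5)
  define S where "S W x = I_has_strategy T W (v @ [x]) A" for W x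
  have mono: "\<And>W W' x N. block_subspace W \<Longrightarrow> block_subspace W' \<Longrightarrow> (\<forall>y\<in>W'. y \<noteq> zvec \<and> N < Min (supp y) \<longrightarrow> y \<in> W) \<Longrightarrow> S W x \<Longrightarrow> S W' x"
    unfolding S_def using strat_transfer by blast
  show ?thesis
  proof (intro conjI impI)
    assume odd: "odd (length v)"
    obtain X where X: "block_subspace X" "X \<subseteq> V"
      "\<forall>x\<in>Evec. (\<forall>W. block_subspace W \<and> W \<subseteq> X \<longrightarrow> \<not> S W x) \<or> (\<forall>W. block_subspace W \<and> W \<subseteq> X \<longrightarrow> S W x)"
    proof -
      have "\<exists>X. block_subspace X \<and> X \<subseteq> V \<and> (\<forall>x\<in>Evec. (\<forall>W. block_subspace W \<and> W \<subseteq> X \<longrightarrow> \<not> S W x) \<or> (\<forall>W. block_subspace W \<and> W \<subseteq> X \<longrightarrow> S W x))"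
        apply (rule decide[of S V])
         apply (erule (3) mono)
        apply (rule V)
        done
      then show thesis using that by blast
    qed
    have "\<exists>x\<in>Y. x \<noteq> zvec \<and> v @ [x] \<in> T \<and> (\<forall>W. block_subspace W \<and> W \<subseteq> X \<longrightarrow> \<not> S W x)"
      if Y: "block_subspace Y" "Y \<subseteq> X" for Y
    proof -
      have "\<not> I_has_strategy T Y v A" using hyp Y X(2) by blast
      then obtain y where y: "y \<in> tail Y 0" "v @ [y] \<in> T" "\<not> S Y y"
        using comb_odd[OF odd, of Y T A] unfolding S_def by blast
      have yY: "y \<in> Y" "y \<noteq> zvec" using y(1) unfolding tail_def by auto
      then have "y \<in> Evec" using block_Evec[OF Y(1)] by blast
      then have "\<forall>W. block_subspace W \<and> W \<subseteq> X \<longrightarrow> \<not> S W y" using X(3) Y y(3) by blast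
      then show ?thesis using yY y(2) by blast
    qed
    then show "\<exists>X. block_subspace X \<and> X \<subseteq> V \<and>
               (\<forall>Y. block_subspace Y \<and> Y \<subseteq> X \<longrightarrow>
                  (\<exists>x\<in>Y. x \<noteq> zvec \<and> v @ [x] \<in> T \<and>
                     (\<forall>W. block_subspace W \<and> W \<subseteq> X \<longrightarrow> \<not> I_has_strategy T W (v @ [x]) A)))"
      using X(1,2) unfolding S_def by blast
  next
    assume ev: "even (length v)"
    obtain n0 where n0: "\<forall>z\<in>tail V n0. v @ [z] \<in> T"
      using rule ev unfolding is_rule_def by blast
    obtain V' where V': "block_subspace V'" "V' \<subseteq> V" "\<forall>z\<in>V'. z \<noteq> zvec \<longrightarrow> n0 < Min (supp z)"
      using tail_sub[OF V, of n0] by blast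
    obtain X where X: "block_subspace X" "X \<subseteq> V'"
      "\<forall>x\<in>Evec. (\<forall>W. block_subspace W \<and> W \<subseteq> X \<longrightarrow> \<not> S W x) \<or> (\<forall>W. block_subspace W \<and> W \<subseteq> X \<longrightarrow> S W x)"
    proof -
      have "\<exists>X. block_subspace X \<and> X \<subseteq> V' \<and> (\<forall>x\<in>Evec. (\<forall>W. block_subspace W \<and> W \<subseteq> X \<longrightarrow> \<not> S W x) \<or> (\<forall>W. block_subspace W \<and> W \<subseteq> X \<longrightarrow> S W x))"
        apply (rule decide[of S V'])
         apply (erule (3) mono)
        apply (rule V'(1))
        done
      then show thesis using that by blast
    qed
    have "\<not> I_has_strategy T X v A" using hyp X(1,2) V'(2) by blast
    then obtain Z where Z: "block_subspace Z" "Z \<subseteq> X" "\<not> (\<exists>x\<in>Z. x \<noteq> zvec \<and> v @ [x] \<in> T \<and> S X x)"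
      using comb_even[OF ev, of X T A] unfolding S_def by blast
    have inT: "v @ [x] \<in> T" if "x \<in> Z" "x \<noteq> zvec" for x
    proof -
      have "x \<in> V'" using that Z(2) X(2) by blast
      then have "x \<in> tail V n0" using V' that(2) unfolding tail_def by blast
      then show ?thesis using n0 by blast
    qed
    have acc: "\<forall>W. block_subspace W \<and> W \<subseteq> Z \<longrightarrow> \<not> S W x" if "x \<in> Z" "x \<noteq> zvec" for x
    proof -
      have "\<not> S X x" using Z(3) inT that by blast
      moreover have "x \<in> Evec" using that Z(1) block_Evec by blast
      ultimately have "\<forall>W. block_subspace W \<and> W \<subseteq> X \<longrightarrow> \<not> S W x" using X(1,3) by blast
      then show ?thesis using Z(2) by blast
    qed
    show "\<exists>X. block_subspace X \<and> X \<subseteq> V \<and>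
               (\<forall>x\<in>X. x \<noteq> zvec \<longrightarrow> v @ [x] \<in> T) \<and>
               (\<forall>x\<in>X. x \<noteq> zvec \<longrightarrow>
                  (\<forall>W. block_subspace W \<and> W \<subseteq> X \<longrightarrow> \<not> I_has_strategy T W (v @ [x]) A))"
      using Z(1,2) X(2) V'(2) inT acc unfolding S_def by blast
  qed
qed

end
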